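(* Let $Q$ be a flow on a digraph $(V,E)$ with $V$ countably infinite. If there exists an invading sequence $\{V_n\}$ such that $\sup\{Q(x,y): (x,y)\in E,\ \{x,y\}\cap(V\setminus V_n)\neq\emptyset\}$ does not converge to $0$ as $n\to\infty$, then $Q$ is not finitely decomposable.
   Context: A flow on $(V,E)$ is a map $Q:E\to[0,+\infty)$. An invading sequence is a sequence of finite sets $V_n\subseteq V$ with $V_n\subseteq V_{n+1}$ and $\bigcup_nV_n=V$. For a directed path $\gamma=(x_0,\dots,x_n)$, $Q_\gamma(x,y)=1$ if $(x,y)=(x_i,x_{i+1})$ for some $i$ and $0$ otherwise. $Q$ is finitely decomposable if $Q=\sum_nq_nQ_{\gamma_n}$ pointwise for a countable family of finite self-avoiding directed paths $\gamma_n$ in $(V,E)$ and weights $q_n\ge0$ with $\sum_nq_n<\infty$. *)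

theory Defs
  imports "HOL-Analysis.Analysis"
begin

text \<open>A flow is a map Q defined on E with nonnegative values (represented by a
  total function on pairs; only values on E matter).\<close>

definition digraph :: "'a set \<Rightarrow> ('a \<times> 'a) set \<Rightarrow> bool" where
  "digraph V E \<longleftrightarrow> E \<subseteq> V \<times> V"

definition is_flow :: "'a set \<Rightarrow> ('a \<times> 'a) set \<Rightarrow> ('a \<times> 'a \<Rightarrow> real) \<Rightarrow> bool" where
  "is_flow V E Q \<longleftrightarrow> (\<forall>e\<in>E. 0 \<le> Q e)"

definition invading_sequence :: "'a set \<Rightarrow> (nat \<Rightarrow> 'a set) \<Rightarrow> bool" where
  "invading_sequence V Vs \<longleftrightarrow>
     (\<forall>n. finite (Vs n) \<and> Vs n \<subseteq> V \<and> Vs n \<subseteq> Vs (Suc n)) \<and> (\<Union>n. Vs n) = V"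

definition path_edges :: "'a list \<Rightarrow> ('a \<times> 'a) set" where
  "path_edges xs = {(xs ! i, xs ! Suc i) | i. Suc i < length xs}"

definition sa_path :: "'a set \<Rightarrow> ('a \<times> 'a) set \<Rightarrow> 'a list \<Rightarrow> bool" where
  "sa_path V E xs \<longleftrightarrow> xs \<noteq> [] \<and> set xs \<subseteq> V \<and> distinct xs \<and> path_edges xs \<subseteq> E"

definition path_flow :: "'a list \<Rightarrow> 'a \<times> 'a \<Rightarrow> real" where
  "path_flow xs e = (if e \<in> path_edges xs then 1 else 0)"

text \<open>Finitely decomposable: Q = sum_n q_n Q_{gamma_n} pointwise on E for a countable
  family (indexed by nat; finite families are padded with zero weights) of finite
  self-avoiding directed paths and weights q_n \<ge> 0 with sum q_n < \<infinity>.\<close>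

definition finitely_decomposable ::
  "'a set \<Rightarrow> ('a \<times> 'a) set \<Rightarrow> ('a \<times> 'a \<Rightarrow> real) \<Rightarrow> bool" where
  "finitely_decomposable V E Q \<longleftrightarrow>
     (\<exists>(\<gamma> :: nat \<Rightarrow> 'a list) (q :: nat \<Rightarrow> real).
        (\<forall>n. sa_path V E (\<gamma> n) \<and> 0 \<le> q n) \<and> summable q \<and>
        (\<forall>e\<in>E. (\<lambda>n. q n * path_flow (\<gamma> n) e) sums Q e))"

text \<open>sup of Q over edges not contained in V_n, valued in the extended reals
  (to allow an unbounded set); the empty supremum of nonnegative values is 0.\<close>

definition boundary_sup ::
  "('a \<times> 'a) set \<Rightarrow> ('a \<times> 'a \<Rightarrow> real) \<Rightarrow> 'a set \<Rightarrow> ereal" where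
  "boundary_sup E Q W =
     Sup (insert 0 {ereal (Q (x, y)) | x y. (x, y) \<in> E \<and> {x, y} \<inter> (- W) \<noteq> {}})"

end

theory Submission
  imports Defs
begin

lemma fin_in_chain:
  assumes mono: "\<And>n. Vs n \<subseteq> Vs (Suc n)" and fin: "finite S" and sub: "S \<subseteq> (\<Union>n. Vs n)"
  shows "\<exists>M. \<forall>m\<ge>M. S \<subseteq> Vs m"
  using fin sub
proof (induction S rule: finite_induct)
  case empty then show ?case by auto
next
  case (insert x F)
  then obtain M where M: "\<forall>m\<ge>M. F \<subseteq> Vs m" by auto
  from insert obtain k where k: "x \<in> Vs k" by auto
  have "\<forall>m\<ge>max M k. insert x F \<subseteq> Vs m"
  proof (intro allI impI)
    fix m assume "max M k \<le> m"
    then have "Vs k \<subseteq> Vs m" using lift_Suc_mono_le[of Vs, OF mono] by auto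
    then show "insert x F \<subseteq> Vs m" using M k \<open>max M k \<le> m\<close> by auto
  qed
  then show ?case by blast
qed

lemma path_edges_set: "(x, y) \<in> path_edges xs \<Longrightarrow> x \<in> set xs \<and> y \<in> set xs"
  unfolding path_edges_def by auto

theorem proposition2p5:
  fixes V :: "'a set" and E :: "('a \<times> 'a) set" and Q :: "'a \<times> 'a \<Rightarrow> real"
  assumes "digraph V E"
    and "is_flow V E Q"
    and "countable V" and "infinite V"
    and "\<exists>Vs. invading_sequence V Vs \<and>
               \<not> ((\<lambda>n. boundary_sup E Q (Vs n)) \<longlonglongrightarrow> 0)"
  shows "\<not> finitely_decomposable V E Q"
proof
  assume "finitely_decomposable V E Q"
  then obtain \<gamma> q where g: "\<And>n. sa_path V E (\<gamma> n)" and q0: "\<And>n. 0 \<le> q n"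
    and sq: "summable q" and sm: "\<And>e. e \<in> E \<Longrightarrow> (\<lambda>n. q n * path_flow (\<gamma> n) e) sums Q e"
    unfolding finitely_decomposable_def by blast
  from assms(5) obtain Vs where inv: "invading_sequence V Vs"
    and nt: "\<not> ((\<lambda>n. boundary_sup E Q (Vs n)) \<longlonglongrightarrow> 0)" by blast
  have mono: "\<And>n. Vs n \<subseteq> Vs (Suc n)" and UV: "(\<Union>n. Vs n) = V"
    using inv unfolding invading_sequence_def by auto
  have key: "\<exists>M. \<forall>m\<ge>M. boundary_sup E Q (Vs m) \<le> ereal \<epsilon>" if eps: "\<epsilon> > 0" for \<epsilon>
  proof -
    obtain N where N: "\<forall>n\<ge>N. norm (\<Sum>i. q (i + n)) < \<epsilon>"
      using suminf_exist_split[OF eps sq] by blast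
    have tail: "(\<Sum>i. q (i + N)) < \<epsilon>" using N by auto
    define S where "S = (\<Union>n<N. set (\<gamma> n))"
    have "finite S" unfolding S_def by auto
    moreover have "S \<subseteq> (\<Union>n. Vs n)" using g UV unfolding S_def sa_path_def by auto
    ultimately obtain M where M: "\<forall>m\<ge>M. S \<subseteq> Vs m" using fin_in_chain[of Vs S, OF mono] by blast
    have "boundary_sup E Q (Vs m) \<le> ereal \<epsilon>" if "m \<ge> M" for m
      unfolding boundary_sup_def
    proof (rule Sup_least)
      fix z assume "z \<in> insert 0 {ereal (Q (x, y)) | x y. (x, y) \<in> E \<and> {x, y} \<inter> (- Vs m) \<noteq> {}}"
      then consider "z = 0" | x y where "z = ereal (Q (x, y))" "(x, y) \<in> E" "{x, y} \<inter> (- Vs m) \<noteq> {}"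
        by blast
      then show "z \<le> ereal \<epsilon>"
      proof cases
        case 1 then show ?thesis using eps by simp
      next
        case 2
        have SV: "S \<subseteq> Vs m" using M that by auto
        have zero: "q n * path_flow (\<gamma> n) (x, y) = 0" if "n < N" for n
        proof -
          have "(x, y) \<notin> path_edges (\<gamma> n)"
          proof
            assume "(x, y) \<in> path_edges (\<gamma> n)"
            then have "x \<in> S" "y \<in> S" using path_edges_set that unfolding S_def by fastforce+
            then show False using SV 2(3) by auto
          qed
          then show ?thesis unfolding path_flow_def by simp
        qed
        have s: "(\<lambda>n. q n * path_flow (\<gamma> n) (x, y)) sums Q (x, y)" using sm 2(2) by blast
        have s2: "(\<lambda>i. q (i + N) * path_flow (\<gamma> (i + N)) (x, y)) sums Q (x, y)"
        proof -
          have "(\<lambda>i. q (i + N) * path_flow (\<gamma> (i + N)) (x, y)) sums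
                 (Q (x, y) - (\<Sum>i<N. q i * path_flow (\<gamma> i) (x, y)))"
            using sums_split_initial_segment[OF s, of N] by simp
          moreover have "(\<Sum>i<N. q i * path_flow (\<gamma> i) (x, y)) = 0" using zero by (intro sum.neutral) simp
          ultimately show ?thesis by simp
        qed
        have s3: "(\<lambda>i. q (i + N)) sums (\<Sum>i. q (i + N))"
          using summable_ignore_initial_segment[OF sq, of N] summable_sums by blast
        have "Q (x, y) \<le> (\<Sum>i. q (i + N))"
        proof (rule sums_le[OF _ s2 s3])
          fix i show "q (i + N) * path_flow (\<gamma> (i + N)) (x, y) \<le> q (i + N)"
            using q0[of "i+N"] unfolding path_flow_def by simp
        qed
        then show ?thesis using 2(1) tail by simp
      qed
    qed
    then show ?thesis by blast
  qed
  have nonneg: "\<And>m. 0 \<le> boundary_sup E Q (Vs m)"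
    unfolding boundary_sup_def by (rule Sup_upper) simp
  have "(\<lambda>n. boundary_sup E Q (Vs n)) \<longlonglongrightarrow> 0"
  proof (rule order_tendstoI)
    fix a :: ereal assume "a < 0"
    then show "\<forall>\<^sub>F n in sequentially. a < boundary_sup E Q (Vs n)"
      using nonneg by (intro always_eventually allI) (meson less_le_trans)
  next
    fix a :: ereal assume "0 < a"
    then obtain b where b: "0 < b" "b < a" using dense by blast
    then obtain r where r: "b \<le> ereal r" "ereal r < a" "0 < r"
    proof (cases b)
      case (real r) then show ?thesis using that b by auto
    next
      case PInf then show ?thesis using b by auto
    next
      case MInf then show ?thesis using b by auto
    qed
    obtain M where "\<forall>m\<ge>M. boundary_sup E Q (Vs m) \<le> ereal r" using key r(3) by blast
    then show "\<forall>\<^sub>F n in sequentially. boundary_sup E Q (Vs n) < a"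
      unfolding eventually_sequentially using r(2) by (meson le_less_trans)
  qed
  with nt show False by blast
qed

end
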